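(* Let $n\ge3$. There is no isomorphism preserving the structure of $\mathbb{Z}_2^n$-graded algebra between $\mathbb{O}_{0,n}$ and $\mathbb{O}_{n,0}$.
   Context: $\mathbb{Z}_2=\{0,1\}$. For $p+q=n\ge3$, $\mathbb{O}_{p,q}$ is the real algebra with basis $\{u_x: x\in\mathbb{Z}_2^n\}$ and product $u_x\cdot u_y=(-1)^{f(x,y)}u_{x+y}$, where $f(x,y)=\sum_{1\le i<j<k\le n}(x_ix_jy_k+x_iy_jx_k+y_ix_jx_k)+\sum_{1\le i\le j\le n}x_iy_j+\sum_{1\le i\le p}x_iy_i$. An isomorphism preserving the graded structure is an algebra isomorphism sending each homogeneous element (scalar multiple of some $u_x$) to a homogeneous element. *)

theory Defs
  imports Complex_Main
begin

text \<open>Elements of Z_2^n are encoded as x :: nat => bool with x i = False for i >= n;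
  coordinate i (0-based) corresponds to coordinate i+1 of the paper.
  Addition in Z_2^n is pointwise exclusive or.\<close>

definition Zn :: "nat \<Rightarrow> (nat \<Rightarrow> bool) set" where
  "Zn n = {x. \<forall>i\<ge>n. \<not> x i}"

definition zadd :: "(nat \<Rightarrow> bool) \<Rightarrow> (nat \<Rightarrow> bool) \<Rightarrow> (nat \<Rightarrow> bool)" where
  "zadd x y = (\<lambda>i. x i \<noteq> y i)"

definition bt :: "(nat \<Rightarrow> bool) \<Rightarrow> nat \<Rightarrow> nat" where
  "bt x i = (if x i then 1 else 0)"

definition twist :: "nat \<Rightarrow> nat \<Rightarrow> (nat \<Rightarrow> bool) \<Rightarrow> (nat \<Rightarrow> bool) \<Rightarrow> nat" where
  "twist p q x y =
     (\<Sum>i<p+q. \<Sum>j<p+q. \<Sum>k<p+q. if i < j \<and> j < k then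
         bt x i * bt x j * bt y k + bt x i * bt y j * bt x k + bt y i * bt x j * bt x k else 0)
   + (\<Sum>i<p+q. \<Sum>j<p+q. if i \<le> j then bt x i * bt y j else 0)
   + (\<Sum>i<p. bt x i * bt y i)"

text \<open>The real algebra O_{p,q}: elements are real coefficient functions on Z_2^n
  (vanishing outside Z_2^n), i.e. a = sum_x a(x) u_x.\<close>
definition Ocarrier :: "nat \<Rightarrow> nat \<Rightarrow> ((nat \<Rightarrow> bool) \<Rightarrow> real) set" where
  "Ocarrier p q = {a. \<forall>x. x \<notin> Zn (p+q) \<longrightarrow> a x = 0}"

definition ubasis :: "(nat \<Rightarrow> bool) \<Rightarrow> (nat \<Rightarrow> bool) \<Rightarrow> real" where
  "ubasis x = (\<lambda>z. if z = x then 1 else 0)"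

text \<open>Bilinear extension of u_x . u_y = (-1)^f(x,y) u_{x+y}.\<close>
definition Omult :: "nat \<Rightarrow> nat \<Rightarrow> ((nat \<Rightarrow> bool) \<Rightarrow> real) \<Rightarrow> ((nat \<Rightarrow> bool) \<Rightarrow> real)
    \<Rightarrow> ((nat \<Rightarrow> bool) \<Rightarrow> real)" where
  "Omult p q a b = (\<lambda>z. \<Sum>x\<in>Zn (p+q). \<Sum>y\<in>Zn (p+q).
      if zadd x y = z then (-1::real) ^ twist p q x y * a x * b y else 0)"

definition homogeneous :: "nat \<Rightarrow> nat \<Rightarrow> ((nat \<Rightarrow> bool) \<Rightarrow> real) \<Rightarrow> bool" where
  "homogeneous p q a \<longleftrightarrow> (\<exists>x\<in>Zn (p+q). \<exists>c::real. a = (\<lambda>z. c * ubasis x z))"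

definition graded_iso :: "nat \<Rightarrow> nat \<Rightarrow> nat \<Rightarrow> nat \<Rightarrow>
    (((nat \<Rightarrow> bool) \<Rightarrow> real) \<Rightarrow> ((nat \<Rightarrow> bool) \<Rightarrow> real)) \<Rightarrow> bool" where
  "graded_iso p q p' q' \<phi> \<longleftrightarrow>
     bij_betw \<phi> (Ocarrier p q) (Ocarrier p' q') \<and>
     (\<forall>a\<in>Ocarrier p q. \<forall>b\<in>Ocarrier p q. \<phi> (\<lambda>z. a z + b z) = (\<lambda>z. \<phi> a z + \<phi> b z)) \<and>
     (\<forall>a\<in>Ocarrier p q. \<forall>c::real. \<phi> (\<lambda>z. c * a z) = (\<lambda>z. c * \<phi> a z)) \<and>
     (\<forall>a\<in>Ocarrier p q. \<forall>b\<in>Ocarrier p q. \<phi> (Omult p q a b) = Omult p' q' (\<phi> a) (\<phi> b)) \<and>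
     (\<forall>a\<in>Ocarrier p q. homogeneous p q a \<longrightarrow> homogeneous p' q' (\<phi> a))"

end

theory Submission
  imports Defs begin


definition Kc :: "(nat\<Rightarrow>bool) \<Rightarrow> nat \<Rightarrow> nat" where "Kc x m = (\<Sum>i<m. bt x i)"
definition C2c :: "(nat\<Rightarrow>bool) \<Rightarrow> nat \<Rightarrow> nat" where "C2c x m = (\<Sum>j<m. bt x j * Kc x j)"
definition C3c :: "(nat\<Rightarrow>bool) \<Rightarrow> nat \<Rightarrow> nat" where "C3c x m = (\<Sum>k<m. bt x k * C2c x k)"

lemma bt01: "bt x i = 0 \<or> bt x i = 1" by (simp add: bt_def)
lemma btsq: "bt x i * bt x i = bt x i" by (simp add: bt_def)

lemma odd4: "odd (k::nat) \<longleftrightarrow> k mod 4 = 1 \<or> k mod 4 = 3" by presburger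

lemma par: "(odd (C2c x m) \<longleftrightarrow> Kc x m mod 4 \<in> {2,3}) \<and> (odd (C3c x m) \<longleftrightarrow> Kc x m mod 4 = 3)"
proof (induction m)
  case 0 then show ?case by (simp add: C2c_def C3c_def Kc_def)
next
  case (Suc m)
  have K: "Kc x (Suc m) = Kc x m + bt x m" by (simp add: Kc_def)
  have C2: "C2c x (Suc m) = C2c x m + bt x m * Kc x m" by (simp add: C2c_def)
  have C3: "C3c x (Suc m) = C3c x m + bt x m * C2c x m" by (simp add: C3c_def)
  show ?case
  proof (cases "bt x m = 0")
    case True then show ?thesis using Suc K C2 C3 by simp
  next
    case False
    then have b: "bt x m = 1" using bt01 by metis
    have "Kc x m mod 4 = 0 \<or> Kc x m mod 4 = 1 \<or> Kc x m mod 4 = 2 \<or> Kc x m mod 4 = 3" by arith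
    moreover have "odd (Kc x m) \<longleftrightarrow> Kc x m mod 4 = 1 \<or> Kc x m mod 4 = 3" by (rule odd4)
    moreover have "Suc (Kc x m) mod 4 = (Kc x m mod 4 + 1) mod 4" by presburger
    ultimately show ?thesis using Suc K C2 C3 b by auto
  qed
qed

lemma filt: "m \<le> (N::nat) \<Longrightarrow> (\<Sum>i<N. if i < m then f i else 0) = (\<Sum>i<m. (f i :: nat))"
proof -
  assume mN: "m \<le> N"
  from mN have "{i\<in>{..<N}. i < m} = {..<m}" by auto
  then show ?thesis using sum.inter_filter[of "{..<N}" f "\<lambda>i. i<m", symmetric] by simp
qed

lemma S_eq: "(\<Sum>i<N. \<Sum>j<N. if i \<le> j then bt x i * bt x j else 0) = C2c x N + Kc x N"
proof -
  have "(\<Sum>i<N. \<Sum>j<N. if i \<le> j then bt x i * bt x j else 0)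
      = (\<Sum>j<N. \<Sum>i<N. if i \<le> j then bt x i * bt x j else 0)" by (rule sum.swap)
  also have "\<dots> = (\<Sum>j<N. bt x j * (Kc x j + bt x j))"
  proof (rule sum.cong[OF refl])
    fix j assume j: "j \<in> {..<N}"
    have "(\<Sum>i<N. if i \<le> j then bt x i * bt x j else 0) = (\<Sum>i<N. if i < Suc j then bt x i * bt x j else 0)"
      by (simp add: less_Suc_eq_le)
    also have "\<dots> = (\<Sum>i<Suc j. bt x i * bt x j)" using j by (intro filt) auto
    also have "\<dots> = bt x j * (Kc x j + bt x j)" by (simp add: Kc_def sum_distrib_left algebra_simps)
    finally show "(\<Sum>i<N. if i \<le> j then bt x i * bt x j else 0) = bt x j * (Kc x j + bt x j)" .
  qed
  also have "\<dots> = C2c x N + Kc x N" by (simp add: C2c_def Kc_def algebra_simps btsq sum.distrib)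
  finally show ?thesis .
qed

lemma T_eq: "(\<Sum>i<N. \<Sum>j<N. \<Sum>k<N. if i < j \<and> j < k then
         bt x i * bt x j * bt x k + bt x i * bt x j * bt x k + bt x i * bt x j * bt x k else 0) = 3 * C3c x N"
proof -
  let ?F = "\<lambda>i j k. if i < j \<and> j < k then bt x i * bt x j * bt x k + bt x i * bt x j * bt x k + bt x i * bt x j * bt x k else 0"
  have "(\<Sum>i<N. \<Sum>j<N. \<Sum>k<N. ?F i j k) = (\<Sum>i<N. \<Sum>k<N. \<Sum>j<N. ?F i j k)"
    by (rule sum.cong[OF refl], rule sum.swap)
  also have "\<dots> = (\<Sum>k<N. \<Sum>i<N. \<Sum>j<N. ?F i j k)" by (rule sum.swap)
  also have "\<dots> = (\<Sum>k<N. \<Sum>j<N. \<Sum>i<N. ?F i j k)"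
    by (rule sum.cong[OF refl], rule sum.swap)
  also have "\<dots> = (\<Sum>k<N. 3 * (bt x k * C2c x k))"
  proof (rule sum.cong[OF refl])
    fix k assume k: "k \<in> {..<N}"
    have "(\<Sum>j<N. \<Sum>i<N. ?F i j k) = (\<Sum>j<N. if j < k then 3 * (bt x j * bt x k * Kc x j) else 0)"
    proof (rule sum.cong[OF refl])
      fix j assume j: "j \<in> {..<N}"
      show "(\<Sum>i<N. ?F i j k) = (if j < k then 3 * (bt x j * bt x k * Kc x j) else 0)"
      proof (cases "j < k")
        case True
        have "(\<Sum>i<N. ?F i j k) = (\<Sum>i<N. if i < j then 3 * (bt x i * bt x j * bt x k) else 0)"
          using True by (intro sum.cong) auto
        also have "\<dots> = (\<Sum>i<j. 3 * (bt x i * bt x j * bt x k))" using j by (intro filt) auto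
        also have "\<dots> = 3 * (bt x j * bt x k * Kc x j)" by (simp add: Kc_def sum_distrib_left sum_distrib_right algebra_simps)
        finally show ?thesis using True by simp
      qed simp
    qed
    also have "\<dots> = (\<Sum>j<k. 3 * (bt x j * bt x k * Kc x j))" using k by (intro filt) auto
    also have "\<dots> = 3 * (bt x k * C2c x k)" by (simp add: C2c_def sum_distrib_left sum_distrib_right algebra_simps)
    finally show "(\<Sum>j<N. \<Sum>i<N. ?F i j k) = 3 * (bt x k * C2c x k)" .
  qed
  also have "\<dots> = 3 * C3c x N" by (simp add: C3c_def sum_distrib_left)
  finally show ?thesis .
qed

lemma tw0: "twist 0 n x x = 3 * C3c x n + C2c x n + Kc x n"
  unfolding twist_def using T_eq[where N=n and x=x] S_eq[where N=n and x=x] by simp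

lemma twn: "twist n 0 x x = 3 * C3c x n + C2c x n + 2 * Kc x n"
  unfolding twist_def using T_eq[where N=n and x=x] S_eq[where N=n and x=x] by (simp add: btsq Kc_def)

lemma key: "odd (Kc x n) \<Longrightarrow> odd (twist 0 n x x) \<and> even (twist n 0 x x)"
proof -
  assume o: "odd (Kc x n)"
  have "Kc x n mod 4 = 1 \<or> Kc x n mod 4 = 3" using o odd4 by blast
  then show ?thesis using par[of x n] o odd4[of "Kc x n"] unfolding tw0 twn by auto
qed


definition zro :: "nat \<Rightarrow> bool" where "zro = (\<lambda>_. False)"

lemma finZn: "finite (Zn n)"
proof -
  have "Zn n \<subseteq> (\<lambda>S i. i \<in> S) ` Pow {..<n}"
  proof
    fix x assume "x \<in> Zn n"
    then have "x = (\<lambda>i. i \<in> {i. i < n \<and> x i})" by (auto simp: Zn_def) (metis not_le)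
    then show "x \<in> (\<lambda>S i. i \<in> S) ` Pow {..<n}" by blast
  qed
  then show ?thesis by (rule finite_subset) simp
qed

lemma zro_Zn: "zro \<in> Zn n" by (simp add: Zn_def zro_def)

lemma twist_zro1: "twist p q zro y = 0" by (simp add: twist_def bt_def zro_def)
lemma twist_zro2: "twist p q x zro = 0" by (simp add: twist_def bt_def zro_def)

lemma dd: "finite A \<Longrightarrow> finite B \<Longrightarrow>
  (\<Sum>x'\<in>A. \<Sum>y'\<in>B. if x' = x then (if y' = y then (v x' y'::real) else 0) else 0) = (if x \<in> A \<and> y \<in> B then v x y else 0)"
proof -
  assume f: "finite A" "finite B"
  have "(\<Sum>x'\<in>A. \<Sum>y'\<in>B. if x' = x then (if y' = y then (v x' y'::real) else 0) else 0)
     = (\<Sum>x'\<in>A. if x' = x then (if y \<in> B then v x' y else 0) else 0)"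
  proof (rule sum.cong[OF refl])
    fix x' show "(\<Sum>y'\<in>B. if x' = x then (if y' = y then (v x' y'::real) else 0) else 0) = (if x' = x then (if y \<in> B then v x' y else 0) else 0)"
      using f by (cases "x' = x") (simp_all add: sum.delta')
  qed
  also have "\<dots> = (if x \<in> A \<and> y \<in> B then v x y else 0)" using f by (simp add: sum.delta')
  finally show ?thesis .
qed

lemma mult_basis:
  assumes x: "x \<in> Zn (p+q)" and y: "y \<in> Zn (p+q)"
  shows "Omult p q (\<lambda>z. c * ubasis x z) (\<lambda>z. d * ubasis y z) =
     (\<lambda>z. if z = zadd x y then (-1)^twist p q x y * c * d else 0)"
proof
  fix z
  have "Omult p q (\<lambda>z. c * ubasis x z) (\<lambda>z. d * ubasis y z) z =
     (\<Sum>x'\<in>Zn (p+q). \<Sum>y'\<in>Zn (p+q). if x' = x then (if y' = y then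
        (if zadd x y = z then (-1)^twist p q x y * c * d else 0) else 0) else 0)"
    unfolding Omult_def ubasis_def by (intro sum.cong refl) auto
  also have "\<dots> = (if z = zadd x y then (-1)^twist p q x y * c * d else 0)"
    using x y finZn dd[of "Zn (p+q)" "Zn (p+q)" x y "\<lambda>_ _. if zadd x y = z then (-1)^twist p q x y * c * d else 0"] by auto
  finally show "Omult p q (\<lambda>z. c * ubasis x z) (\<lambda>z. d * ubasis y z) z = (if z = zadd x y then (-1)^twist p q x y * c * d else 0)" .
qed

lemma unit_left:
  assumes a: "a \<in> Ocarrier p q"
  shows "Omult p q (ubasis zro) a = a"
proof
  fix z
  have "Omult p q (ubasis zro) a z =
     (\<Sum>x'\<in>Zn (p+q). \<Sum>y'\<in>Zn (p+q). if x' = zro then (if y' = z then a y' else 0) else 0)"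
    unfolding Omult_def ubasis_def by (intro sum.cong refl) (auto simp: twist_zro1[unfolded zro_def] zadd_def zro_def)
  also have "\<dots> = (if z \<in> Zn (p+q) then a z else 0)"
    using dd[of "Zn (p+q)" "Zn (p+q)" zro z "\<lambda>_ y'. a y'"] finZn zro_Zn by simp
  also have "\<dots> = a z" using a by (simp add: Ocarrier_def)
  finally show "Omult p q (ubasis zro) a z = a z" .
qed

lemma unit_right:
  assumes a: "a \<in> Ocarrier p q"
  shows "Omult p q a (ubasis zro) = a"
proof
  fix z
  have "Omult p q a (ubasis zro) z =
     (\<Sum>x'\<in>Zn (p+q). \<Sum>y'\<in>Zn (p+q). if x' = z then (if y' = zro then a x' else 0) else 0)"
    unfolding Omult_def ubasis_def by (intro sum.cong refl) (auto simp: twist_zro2[unfolded zro_def] zadd_def zro_def)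
  also have "\<dots> = (if z \<in> Zn (p+q) then a z else 0)"
    using dd[of "Zn (p+q)" "Zn (p+q)" z zro "\<lambda>x' _. a x'"] finZn zro_Zn by simp
  also have "\<dots> = a z" using a by (simp add: Ocarrier_def)
  finally show "Omult p q a (ubasis zro) z = a z" .
qed

lemma basis_car: "x \<in> Zn (p+q) \<Longrightarrow> (\<lambda>z. c * ubasis x z) \<in> Ocarrier p q"
  by (auto simp: Ocarrier_def ubasis_def)

lemma zadd_self: "zadd x x = zro" by (simp add: zadd_def zro_def)


lemma sign_eq:
  assumes "(-1::real)^t = (-1)^t' * c * c"
  shows "c \<noteq> 0 \<and> (even t \<longleftrightarrow> even t')"
proof -
  have cc: "c * c \<ge> 0" by simp
  have "c \<noteq> 0" using assms by auto
  moreover have "even t \<longleftrightarrow> even t'"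
  proof (cases "even t")
    case True
    then have "1 = (-1::real)^t' * (c*c)" using assms by (simp add: mult.assoc)
    then show ?thesis using True cc
    proof (cases "even t'")
      case False then have "(-1::real)^t' = -1" by simp
      then show ?thesis using \<open>1 = (-1::real)^t' * (c*c)\<close> cc by simp
    qed simp
  next
    case False
    then have "-1 = (-1::real)^t' * (c*c)" using assms by (simp add: mult.assoc)
    then show ?thesis using False cc
    proof (cases "even t'")
      case True then have "(-1::real)^t' = 1" by simp
      then show ?thesis using \<open>-1 = (-1::real)^t' * (c*c)\<close> cc False by simp
    qed simp
  qed
  ultimately show ?thesis by blast
qed

definition fl :: "(nat \<Rightarrow> bool) \<Rightarrow> (nat \<Rightarrow> bool)" where "fl x = x(0 := \<not> x 0)"

lemma fl_par: assumes "0 < n" shows "odd (Kc (fl x) n) \<longleftrightarrow> even (Kc x n)"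
proof -
  obtain m where n: "n = Suc m" using assms gr0_implies_Suc by blast
  have 1: "Kc x n = bt x 0 + (\<Sum>i<m. bt x (Suc i))" unfolding Kc_def n by (rule sum.lessThan_Suc_shift)
  have 2: "Kc (fl x) n = bt (fl x) 0 + (\<Sum>i<m. bt (fl x) (Suc i))" unfolding Kc_def n by (rule sum.lessThan_Suc_shift)
  have 3: "(\<Sum>i<m. bt (fl x) (Suc i)) = (\<Sum>i<m. bt x (Suc i))" by (simp add: fl_def bt_def)
  show ?thesis unfolding 1 2 3 by (simp add: fl_def bt_def)
qed

lemma fl_fl: "fl (fl w) = w" by (rule ext) (simp add: fl_def)

theorem mainTheorem11:
  fixes n :: nat
  assumes "n \<ge> 3"
  shows "\<not> (\<exists>\<phi>. graded_iso 0 n n 0 \<phi>)"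
proof
  assume "\<exists>\<phi>. graded_iso 0 n n 0 \<phi>"
  then obtain \<phi> where g: "graded_iso 0 n n 0 \<phi>" by blast
  define C where "C = Ocarrier 0 n"
  have C2: "Ocarrier n 0 = C" by (simp add: C_def Ocarrier_def)
  have bij: "bij_betw \<phi> C C" using g C2 by (simp add: graded_iso_def C_def)
  have sc: "\<And>a c. a \<in> C \<Longrightarrow> \<phi> (\<lambda>z. c * a z) = (\<lambda>z. c * \<phi> a z)" using g by (simp add: graded_iso_def C_def)
  have mu: "\<And>a b. a \<in> C \<Longrightarrow> b \<in> C \<Longrightarrow> \<phi> (Omult 0 n a b) = Omult n 0 (\<phi> a) (\<phi> b)"
    using g by (simp add: graded_iso_def C_def)
  have ho: "\<And>a. a \<in> C \<Longrightarrow> homogeneous 0 n a \<Longrightarrow> homogeneous n 0 (\<phi> a)"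
    using g by (simp add: graded_iso_def C_def)
  define e where "e = ubasis zro"
  have eC: "e \<in> C" unfolding e_def C_def using basis_car[of zro 0 n 1] zro_Zn by simp
  have phie: "\<phi> e = e"
  proof -
    obtain a where a: "a \<in> C" "\<phi> a = e" using bij eC by (metis bij_betw_iff_bijections)
    have "e = \<phi> (Omult 0 n e a)" using unit_left[of a 0 n] a by (simp add: e_def C_def)
    also have "\<dots> = Omult n 0 (\<phi> e) e" using mu eC a by simp
    also have "\<dots> = \<phi> e"
    proof -
      have "\<phi> e \<in> Ocarrier n 0" using bij eC C2 by (auto simp: bij_betw_def)
      then show ?thesis using unit_right[of "\<phi> e" n 0] unfolding e_def by simp
    qed
    finally show ?thesis by simp
  qed
  have loc: "\<forall>x\<in>Zn n. \<exists>y. y \<in> Zn n \<and> (\<exists>c. c \<noteq> 0 \<and> \<phi> (ubasis x) = (\<lambda>z. c * ubasis y z) \<and>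
      (even (twist 0 n x x) \<longleftrightarrow> even (twist n 0 y y)))"
  proof
    fix x assume x: "x \<in> Zn n"
    have ux: "ubasis x = (\<lambda>z. 1 * ubasis x z)" by simp
    have uC: "ubasis x \<in> C" using basis_car[of x 0 n 1] x by (simp add: C_def)
    have "homogeneous 0 n (ubasis x)" unfolding homogeneous_def using x by (intro bexI[of _ x] exI[of _ 1]) auto
    then have "homogeneous n 0 (\<phi> (ubasis x))" using ho uC by blast
    then obtain y c where y: "y \<in> Zn n" and phx: "\<phi> (ubasis x) = (\<lambda>z. c * ubasis y z)"
      unfolding homogeneous_def by auto
    have "Omult 0 n (ubasis x) (ubasis x) = (\<lambda>z. if z = zro then (-1)^twist 0 n x x * 1 * 1 else 0)"
      using mult_basis[of x 0 n x 1 1] x by (simp add: zadd_self)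
    also have "\<dots> = (\<lambda>z. (-1)^twist 0 n x x * e z)" by (auto simp: e_def ubasis_def)
    finally have A: "\<phi> (Omult 0 n (ubasis x) (ubasis x)) = (\<lambda>z. (-1)^twist 0 n x x * e z)"
      using sc[OF eC, of "(-1)^twist 0 n x x"] phie by simp
    have B: "\<phi> (Omult 0 n (ubasis x) (ubasis x)) = (\<lambda>z. if z = zro then (-1)^twist n 0 y y * c * c else 0)"
      using mu[OF uC uC] phx mult_basis[of y n 0 y c c] y by (simp add: zadd_self)
    have sgn: "(-1::real)^twist 0 n x x = (-1)^twist n 0 y y * c * c"
      using fun_cong[OF trans[OF A[symmetric] B], of zro] by (simp add: e_def ubasis_def)
    then show "\<exists>y. y \<in> Zn n \<and> (\<exists>c. c \<noteq> 0 \<and> \<phi> (ubasis x) = (\<lambda>z. c * ubasis y z) \<and>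
      (even (twist 0 n x x) \<longleftrightarrow> even (twist n 0 y y)))"
      using sign_eq[OF sgn] y phx by (intro exI[of _ y] conjI exI[of _ c]) auto
  qed
  then obtain \<sigma> where sg: "\<forall>x\<in>Zn n. \<sigma> x \<in> Zn n \<and> (\<exists>c. c \<noteq> 0 \<and> \<phi> (ubasis x) = (\<lambda>z. c * ubasis (\<sigma> x) z) \<and>
      (even (twist 0 n x x) \<longleftrightarrow> even (twist n 0 (\<sigma> x) (\<sigma> x))))"
    using bchoice[OF loc] by (elim exE) (erule that)
  have inj: "inj_on \<sigma> (Zn n)"
  proof
    fix x x' assume x: "x \<in> Zn n" and x': "x' \<in> Zn n" and eq: "\<sigma> x = \<sigma> x'"
    obtain c where c: "c \<noteq> 0" "\<phi> (ubasis x) = (\<lambda>z. c * ubasis (\<sigma> x) z)" using sg x by blast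
    obtain c' where c'0: "c' \<noteq> 0" "\<phi> (ubasis x') = (\<lambda>z. c' * ubasis (\<sigma> x') z)" using sg x' by blast
    then have c': "c' \<noteq> 0" "\<phi> (ubasis x') = (\<lambda>z. c' * ubasis (\<sigma> x) z)" using eq by simp_all
    have uC: "ubasis x \<in> C" using basis_car[of x 0 n 1] x by (simp add: C_def)
    have uC': "ubasis x' \<in> C" using basis_car[of x' 0 n 1] x' by (simp add: C_def)
    have m1: "(\<lambda>z. c' * ubasis x z) \<in> C" using basis_car[of x 0 n c'] x by (simp add: C_def)
    have m2: "(\<lambda>z. c * ubasis x' z) \<in> C" using basis_car[of x' 0 n c] x' by (simp add: C_def)
    have "\<phi> (\<lambda>z. c' * ubasis x z) = \<phi> (\<lambda>z. c * ubasis x' z)"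
      using sc[OF uC, of c'] sc[OF uC', of c] c c' by (simp add: mult_ac)
    then have "(\<lambda>z. c' * ubasis x z) = (\<lambda>z. c * ubasis x' z)"
      using bij m1 m2 by (simp add: bij_betw_def inj_on_def)
    then have "c' * ubasis x x = c * ubasis x' x" by metis
    then show "x = x'" using c' by (auto simp: ubasis_def split: if_splits)
  qed
  define P1 where "P1 = {x\<in>Zn n. even (twist 0 n x x)}"
  define P2 where "P2 = {x\<in>Zn n. even (twist n 0 x x)}"
  define Ev where "Ev = {x\<in>Zn n. even (Kc x n)}"
  define Od where "Od = {x\<in>Zn n. odd (Kc x n)}"
  have fin: "finite (Zn n)" by (rule finZn)
  have "card (Zn n - P1) \<le> card (Zn n - P2)"
  proof (rule card_inj_on_le)
    show "inj_on \<sigma> (Zn n - P1)" using inj by (rule inj_on_subset) auto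
    show "\<sigma> ` (Zn n - P1) \<subseteq> Zn n - P2" using sg by (auto simp: P1_def P2_def)
    show "finite (Zn n - P2)" using fin by simp
  qed
  moreover have "P1 \<subseteq> Zn n" "P2 \<subseteq> Zn n" by (auto simp: P1_def P2_def)
  ultimately have c21: "card P2 \<le> card P1"
  proof -
    assume h: "card (Zn n - P1) \<le> card (Zn n - P2)" "P1 \<subseteq> Zn n" "P2 \<subseteq> Zn n"
    have f1: "finite P1" "finite P2" using h fin finite_subset by blast+
    have "card (Zn n - P1) = card (Zn n) - card P1" using h f1 by (simp add: card_Diff_subset)
    moreover have "card (Zn n - P2) = card (Zn n) - card P2" using h f1 by (simp add: card_Diff_subset)
    moreover have "card P1 \<le> card (Zn n)" "card P2 \<le> card (Zn n)" using h fin by (simp_all add: card_mono)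
    ultimately show ?thesis using h by linarith
  qed
  have "P1 \<subseteq> Ev"
  proof
    fix w assume w: "w \<in> P1"
    then have "w \<in> Zn n" "even (twist 0 n w w)" by (simp_all add: P1_def)
    then show "w \<in> Ev" using key[of w n] by (auto simp: Ev_def)
  qed
  then have c1: "card P1 \<le> card Ev" using fin by (intro card_mono) (auto simp: Ev_def)
  have "card Ev \<le> card Od"
  proof (rule card_inj_on_le)
    show "inj_on fl Ev" by (rule inj_onI) (metis fl_fl)
    show "fl ` Ev \<subseteq> Od"
    proof
      fix w assume "w \<in> fl ` Ev"
      then obtain x where x: "x \<in> Ev" "w = fl x" by blast
      have "0 < n" using assms by simp
      then have "odd (Kc (fl x) n)" using fl_par[of n x] x by (simp add: Ev_def)
      moreover have "fl x \<in> Zn n" using x \<open>0 < n\<close> by (auto simp: Ev_def Zn_def fl_def)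
      ultimately show "w \<in> Od" using x by (simp add: Od_def)
    qed
    show "finite Od" using fin by (simp add: Od_def)
  qed
  moreover have "insert zro Od \<subseteq> P2"
  proof
    fix w assume "w \<in> insert zro Od"
    then show "w \<in> P2"
    proof
      assume "w = zro" then show ?thesis using zro_Zn[of n] by (simp add: P2_def twist_zro1)
    next
      assume "w \<in> Od" then have "w \<in> Zn n" "odd (Kc w n)" by (simp_all add: Od_def)
      then show ?thesis using key[of w n] by (simp add: P2_def)
    qed
  qed
  moreover have "zro \<notin> Od" by (simp add: Od_def Kc_def bt_def zro_def)
  moreover have "finite P2" using fin by (simp add: P2_def)
  ultimately have "card Ev + 1 \<le> card P2" using card_mono[of P2 "insert zro Od"] fin
    by (simp add: Od_def)
  then show False using c1 c21 by simp
qed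

end
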